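(* Let $s$ be a Sturmian word. Then there exists a coloring $c:\mathcal F^+ s\to\{0,1,2\}$ of the non-empty factors of $s$ such that for every factorization $s=V_1V_2\cdots V_n\cdots$ of $s$ into non-empty factors $V_i$, there exist integers $i,j$ with $c(V_i)\neq c(V_j)$. (For instance, $c(V)=0$ if $V$ is not a prefix of $s$, $c(V)=1$ if $V$ is a prefix of $s$ with $r_s(V)=a$, and $c(V)=2$ if $V$ is a prefix of $s$ with $r_s(V)=b$.)
   Context: A Sturmian word is an infinite word $s\in\{a,b\}^{\omega}$ that is aperiodic (not ultimately periodic) and balanced: for all factors $u,v$ of $s$ with $|u|=|v|$ one has $||u|_x-|v|_x|\le 1$ for $x\in\{a,b\}$, where $|u|_x$ is the number of occurrences of $x$ in $u$. $\mathcal F^+ s$ is the set of non-empty factors of $s$. A non-empty factor $w$ of $s$ is rich in the letter $z\in\{a,b\}$ if there is a factor $v$ of $s$ with $|v|=|w|$ and $|w|_z>|v|_z$; every non-empty factor of a Sturmian word is rich in exactly one letter, and $r_s(w)\in\{a,b\}$ denotes that letter. *)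

theory Defs
  imports Main
begin

datatype letter = La | Lb

definition factors :: "(nat \<Rightarrow> letter) \<Rightarrow> letter list set" where
  "factors s = {u. \<exists>i. u = map s [i..<i + length u]}"

definition nonempty_factors :: "(nat \<Rightarrow> letter) \<Rightarrow> letter list set" where
  "nonempty_factors s = {u \<in> factors s. u \<noteq> []}"

definition balanced :: "(nat \<Rightarrow> letter) \<Rightarrow> bool" where
  "balanced s \<longleftrightarrow> (\<forall>u v x. u \<in> factors s \<longrightarrow> v \<in> factors s \<longrightarrow> length u = length v \<longrightarrow>
      \<bar>int (count_list u x) - int (count_list v x)\<bar> \<le> 1)"

definition ultimately_periodic :: "(nat \<Rightarrow> letter) \<Rightarrow> bool" where
  "ultimately_periodic s \<longleftrightarrow> (\<exists>p>0. \<exists>N. \<forall>n\<ge>N. s (n + p) = s n)"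

definition sturmian :: "(nat \<Rightarrow> letter) \<Rightarrow> bool" where
  "sturmian s \<longleftrightarrow> \<not> ultimately_periodic s \<and> balanced s"

text \<open>s = V 0 V 1 V 2 ... with every V i non-empty: the i-th block occupies
  positions starting at the total length of the previous blocks.\<close>
definition factorization :: "(nat \<Rightarrow> letter list) \<Rightarrow> (nat \<Rightarrow> letter) \<Rightarrow> bool" where
  "factorization V s \<longleftrightarrow> (\<forall>i. V i \<noteq> [] \<and>
      V i = map s [(\<Sum>k<i. length (V k)) ..< (\<Sum>k<i. length (V k)) + length (V i)])"

end

theory Submission
  imports Defs
begin

fun cnt :: "(nat \<Rightarrow> letter) \<Rightarrow> letter \<Rightarrow> nat \<Rightarrow> nat \<Rightarrow> nat" where
  "cnt s x p 0 = 0"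
| "cnt s x p (Suc L) = cnt s x p L + (if s (p + L) = x then 1 else 0)"

lemma cnt_add: "cnt s x p (L1 + L2) = cnt s x p L1 + cnt s x (p + L1) L2"
  by (induction L2) (auto simp: add.assoc)

lemma cnt_cong: "(\<And>l. l < L \<Longrightarrow> s (p + l) = s (q + l)) \<Longrightarrow> cnt s x p L = cnt s x q L"
  by (induction L) auto

lemma cnt_le: "cnt s x p L \<le> L"
  by (induction L) auto

lemma cnt_ab: "cnt s La p L + cnt s Lb p L = L"
  by (induction L) (auto, metis letter.exhaust)

lemma count_cnt: "count_list (map s [p..<p+L]) x = cnt s x p L"
  by (induction L) (auto simp: count_list_append)

lemma letter_eq: "((y::letter) = x \<longleftrightarrow> z = x) \<Longrightarrow> y = z"
  by (cases x; cases y; cases z) auto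

lemma bal_cnt: assumes "balanced s" shows "cnt s x p L \<le> cnt s x q L + 1"
proof -
  have "map s [p..<p+L] \<in> factors s" "map s [q..<q+L] \<in> factors s"
    unfolding factors_def by auto
  with assms have "\<bar>int (count_list (map s [p..<p+L]) x) - int (count_list (map s [q..<q+L]) x)\<bar> \<le> 1"
    unfolding balanced_def by auto
  then show ?thesis by (simp add: count_cnt)
qed

lemma cnt_mult_le:
  assumes "\<forall>q. cnt s x q m \<le> cnt s x 0 m"
  shows "cnt s x q (k * m) \<le> k * cnt s x 0 m"
proof (induction k arbitrary: q)
  case 0 then show ?case by simp
next
  case (Suc k)
  have "cnt s x q (Suc k * m) = cnt s x q m + cnt s x (q + m) (k * m)"
    by (simp add: cnt_add)
  also have "\<dots> \<le> cnt s x 0 m + k * cnt s x 0 m" using assms Suc by (meson add_mono)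
  finally show ?case by simp
qed

lemma cnt_sub_list:
  assumes "\<forall>m\<in>set ls. \<forall>q. cnt s x q m \<le> cnt s x 0 m"
  shows "cnt s x p (sum_list ls) \<le> sum_list (map (cnt s x 0) ls)"
  using assms
proof (induction ls arbitrary: p)
  case Nil then show ?case by simp
next
  case (Cons a ls)
  have "cnt s x p (sum_list (a # ls)) = cnt s x p a + cnt s x (p + a) (sum_list ls)"
    by (simp add: cnt_add)
  also have "\<dots> \<le> cnt s x 0 a + sum_list (map (cnt s x 0) ls)"
    using Cons by (meson add_mono list.set_intros)
  finally show ?case by simp
qed

lemma sum_list_split: "sum_list (map (f::_\<Rightarrow>nat) xs) = sum_list (map f (filter P xs)) + sum_list (map f (filter (\<lambda>y. \<not> P y) xs))"
  by (induction xs) auto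

lemma sum_list_eq: "sum_list (map (f::_\<Rightarrow>nat) (filter (\<lambda>y. y = m) xs)) = length (filter (\<lambda>y. y = m) xs) * f m"
  by (induction xs) auto

lemma core:
  assumes bal: "\<And>p q L. cnt s x p L \<le> cnt s x q L + 1"
  and np: "\<not> ultimately_periodic s"
  and npos: "\<And>i. n i \<ge> 1"
  and tdef: "\<And>k. t k = (\<Sum>i<k. (n::nat\<Rightarrow>nat) i)"
  and pre: "\<And>i l. l < n i \<Longrightarrow> s (t i + l) = s l"
  and mx: "\<And>i q. cnt s x q (n i) \<le> cnt s x 0 (n i)"
  shows False
proof -
  note [[show_types=false]]
  define C where "C = cnt s x"
  have t0: "t 0 = 0" and tS: "\<And>i. t (Suc i) = t i + n i" by (simp_all add: tdef)
  have blk: "C (t i) (n i) = C 0 (n i)" for i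
    unfolding C_def by (rule cnt_cong) (simp add: pre)
  have step1: "C (t (Suc i)) L \<le> C (t i) L" for i L
  proof -
    have "C (t i) (n i + L) = C 0 (n i) + C (t (Suc i)) L"
      by (simp add: C_def cnt_add tS blk[unfolded C_def])
    moreover have "C (t i) (L + n i) = C (t i) L + C (t i + L) (n i)"
      by (simp add: C_def cnt_add)
    moreover have "C (t i + L) (n i) \<le> C 0 (n i)" using mx by (simp add: C_def)
    ultimately show ?thesis by (simp add: add.commute)
  qed
  have step1': "C (t i) L \<le> C (t 1) L" if "i \<ge> 1" for i L
    using that
  proof (induction i rule: dec_induct)
    case base then show ?case by simp
  next
    case (step i) then show ?case using step1[of i L] by simp
  qed
  have letdet: "C p (Suc L) = C p L + (if s (p + L) = x then 1 else 0)" for p L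
    by (simp add: C_def)
  obtain L0 where L0: "C (t 1) L0 < C 0 L0"
  proof (cases "\<forall>L. C (t 1) L = C 0 L")
    case True
    have "s (L + n 0) = s L" for L
    proof -
      have "C (t 1) (Suc L) = C 0 (Suc L)" "C (t 1) L = C 0 L" using True by blast+
      then have "(s (t 1 + L) = x) = (s L = x)"
        using letdet[of "t 1" L] letdet[of 0 L]
        by (cases "s (t 1 + L) = x"; cases "s L = x") simp_all
      then have "s (t 1 + L) = s L" by (rule letter_eq)
      moreover have "t 1 = n 0" using tS[of 0] t0 by simp
      ultimately show ?thesis by (simp add: add.commute)
    qed
    then have "ultimately_periodic s" unfolding ultimately_periodic_def
      using npos[of 0] by (intro exI[of _ "n 0"]) auto
    with np show ?thesis by simp
  next
    case False
    then obtain L where "C (t 1) L \<noteq> C 0 L" by auto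
    moreover have "C (t 1) L \<le> C 0 L" using step1[of 0 L] t0 by simp
    ultimately show ?thesis using that le_neq_implies_less by blast
  qed
  have small: "n i < L0" if "i \<ge> 1" for i
  proof (rule ccontr)
    assume "\<not> n i < L0"
    then have "C (t i) L0 = C 0 L0" unfolding C_def by (intro cnt_cong) (simp add: pre)
    with step1'[OF that, of L0] L0 show False by simp
  qed
  have bnd: "n i \<le> max (n 0) L0" for i
    using small[of i] by (cases i) auto
  have "finite (n ` UNIV)"
    by (rule finite_subset[of _ "{..max (n 0) L0}"]) (auto simp: bnd)
  then obtain m where "infinite (n -` {m})"
    using inf_img_fin_domE[of n UNIV] infinite_UNIV_nat by blast
  then have infm: "infinite {i. n i = m}" by (simp add: vimage_def)
  obtain i0 where mi0: "n i0 = m" using infm not_finite_existsD by blast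
  have mpos: "m \<ge> 1" using npos mi0 by auto
  have mmx: "C q m \<le> C 0 m" for q using mx[where i=i0 and q=q] mi0 by (simp add: C_def)
  have bigk: "\<exists>k. J \<le> card {i. i < k \<and> n i = m}" for J
  proof (induction J)
    case 0 then show ?case by auto
  next
    case (Suc J)
    then obtain k where k: "J \<le> card {i. i < k \<and> n i = m}" by auto
    obtain i where i: "n i = m" "i \<ge> k"
    proof -
      have "\<not> (\<forall>i\<in>{i. n i = m}. i < k)" using infm finite_nat_set_iff_bounded by blast
      then show ?thesis using that by (auto simp: not_less)
    qed
    have "insert i {i. i < k \<and> n i = m} \<subseteq> {j. j < Suc i \<and> n j = m}" using i by auto
    then have "card (insert i {i. i < k \<and> n i = m}) \<le> card {j. j < Suc i \<and> n j = m}"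
      by (intro card_mono) auto
    moreover have "card (insert i {i. i < k \<and> n i = m}) = Suc (card {i. i < k \<and> n i = m})"
      using i by (intro card_insert_disjoint) auto
    ultimately show ?case using k by (intro exI[of _ "Suc i"]) auto
  qed
  have lowj: "\<exists>j\<ge>J. \<forall>p. j * C 0 m \<le> C p (j * m) + 1" for J
  proof -
    obtain k where k: "J \<le> card {i. i < k \<and> n i = m}" using bigk by auto
    define ls where "ls = map n [0..<k]"
    define j where "j = length (filter (\<lambda>y. y = m) ls)"
    have jc: "j = card {i. i < k \<and> n i = m}"
      unfolding j_def ls_def by (simp add: length_filter_conv_card cong: conj_cong)
    have tk: "t k = sum_list ls"
      unfolding ls_def tdef by (simp add: interv_sum_list_conv_sum_set_nat atLeast0LessThan)
    have Ctk: "C 0 (t k) = sum_list (map (C 0) ls)"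
      unfolding ls_def
    proof (induction k)
      case 0 then show ?case using t0 by (simp add: C_def)
    next
      case (Suc k)
      have "C 0 (t (Suc k)) = C 0 (t k) + C (t k) (n k)" by (simp add: C_def tS cnt_add)
      then show ?case using Suc blk by simp
    qed
    have allmx: "\<forall>y\<in>set l. \<forall>q. cnt s x q y \<le> cnt s x 0 y" if "set l \<subseteq> set ls" for l
      using that mx unfolding ls_def by auto
    show ?thesis
    proof (intro exI[of _ j] conjI allI)
      show "J \<le> j" using jc k by simp
      fix p
      let ?A = "filter (\<lambda>y. y = m) ls" and ?B = "filter (\<lambda>y. \<not> y = m) ls"
      have e1: "sum_list ls = j * m + sum_list ?B"
        using sum_list_split[of id ls "\<lambda>y. y = m"] sum_list_eq[of id m ls] by (simp add: j_def)
      have e2: "sum_list (map (C 0) ls) = j * C 0 m + sum_list (map (C 0) ?B)"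
        using sum_list_split[of "C 0" ls "\<lambda>y. y = m"] sum_list_eq[of "C 0" m ls] by (simp add: j_def)
      have "C 0 (t k) \<le> C p (t k) + 1" using bal by (simp add: C_def)
      also have "C p (t k) = C p (j * m) + C (p + j * m) (sum_list ?B)"
        by (simp add: tk e1 C_def cnt_add)
      also have "C (p + j * m) (sum_list ?B) \<le> sum_list (map (C 0) ?B)"
        unfolding C_def by (rule cnt_sub_list) (rule allmx, auto)
      finally show "j * C 0 m \<le> C p (j * m) + 1" using Ctk e2 by simp
    qed
  qed
  have low: "j * C 0 m \<le> C p (j * m) + 1" for j p
  proof -
    obtain j' where j': "j' \<ge> j" "\<forall>p. j' * C 0 m \<le> C p (j' * m) + 1" using lowj by blast
    have "C p (j' * m) = C p (j * m) + C (p + j * m) ((j' - j) * m)"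
      using j'(1) by (simp add: C_def cnt_add[symmetric] add_mult_distrib[symmetric])
    moreover have "C (p + j * m) ((j' - j) * m) \<le> (j' - j) * C 0 m"
      unfolding C_def by (rule cnt_mult_le) (use mmx C_def in auto)
    moreover have "j' * C 0 m = j * C 0 m + (j' - j) * C 0 m"
      using j'(1) by (simp add: add_mult_distrib[symmetric])
    ultimately show ?thesis using j'(2)[rule_format, of p] by linarith
  qed
  define Poor where "Poor = {r. C r m < C 0 m}"
  have uniq: "False" if H: "r1 \<in> Poor" "r2 \<in> Poor" "r1 < r2" "r1 mod m = r2 mod m" for r1 r2
  proof -
    obtain l where l: "r2 = r1 + Suc l * m"
    proof -
      have "m dvd (r2 - r1)" using H(3,4) by (metis mod_eq_dvd_iff_nat nat_less_le)
      then obtain d where d: "r2 - r1 = m * d" by (auto elim: dvdE)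
      then have "d \<ge> 1" using H(3) by (cases d) auto
      then show ?thesis using d H(3) by (intro that[of "d - 1"]) (auto simp: algebra_simps)
    qed
    have "C r1 (m + l * m + m) = C r1 (m + l * m) + C (r1 + (m + l * m)) m"
      unfolding C_def by (rule cnt_add)
    moreover have "C r1 (m + l * m) = C r1 m + C (r1 + m) (l * m)"
      unfolding C_def by (rule cnt_add)
    moreover have "r1 + (m + l * m) = r2" using l by simp
    ultimately have "C r1 (m + l * m + m) = C r1 m + C (r1 + m) (l * m) + C r2 m" by simp
    moreover have "C (r1 + m) (l * m) \<le> l * C 0 m"
      unfolding C_def by (rule cnt_mult_le) (use mmx C_def in auto)
    moreover have "m + l * m + m = Suc (Suc l) * m" by simp
    moreover note low[of "Suc (Suc l)" r1]
    ultimately show False using H(1,2) unfolding Poor_def by (simp add: algebra_simps)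
  qed
  have "inj_on (\<lambda>r. r mod m) Poor"
    unfolding inj_on_def by (metis linorder_neqE_nat uniq)
  then have "finite Poor"
    by (rule inj_on_finite[of _ _ "{..<m}"]) (use mpos in auto)
  then obtain P where P: "\<forall>r\<in>Poor. r < P"
    by (metis finite_nat_set_iff_bounded)
  have "s (r + m) = s r" if "r \<ge> P" for r
  proof -
    have "C r m = C 0 m" "C (Suc r) m = C 0 m" using P that mmx unfolding Poor_def
      by (metis (no_types, lifting) le_neq_implies_less linorder_not_le mem_Collect_eq le_SucI)+
    moreover have "C r (1 + m) = C r 1 + C (Suc r) m" "C r (m + 1) = C r m + C (r + m) 1"
      unfolding C_def using cnt_add[of s x r 1 m] cnt_add[of s x r m 1] by simp_all
    ultimately have "(s (r + m) = x) = (s r = x)"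
      by (simp add: C_def add.commute split: if_splits)
    then show ?thesis by (rule letter_eq)
  qed
  then have "ultimately_periodic s" unfolding ultimately_periodic_def
    using mpos by (intro exI[of _ m]) auto
  with np show False by simp
qed

lemma if3: "(if P then (if Q then 1 else 2) else 0) \<in> {0, 1, 2::nat}"
  by auto

lemma if12: "(if P then 1 else (2::nat)) = 1 \<Longrightarrow> P" by (cases P) auto
lemma if12': "x \<noteq> 1 \<Longrightarrow> x = (if P then 1 else (2::nat)) \<Longrightarrow> \<not> P" by (cases P) auto

lemma blocks_of_fact:
  assumes "factorization V s"
  shows "V i = map s [(\<Sum>k<i. length (V k)) ..< (\<Sum>k<i. length (V k)) + length (V i)]" "V i \<noteq> []"
  using assms unfolding factorization_def by auto

theorem mainTheorem8:
  fixes s :: "nat \<Rightarrow> letter"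
  assumes "sturmian s"
  shows "\<exists>c :: letter list \<Rightarrow> nat. (\<forall>w \<in> nonempty_factors s. c w \<in> {0, 1, 2}) \<and>
           (\<forall>V. factorization V s \<longrightarrow> (\<exists>i j. c (V i) \<noteq> c (V j)))"
proof -
  have bl: "balanced s" and np: "\<not> ultimately_periodic s" using assms by (auto simp: sturmian_def)
  define c :: "letter list \<Rightarrow> nat" where
    "c w = (if w = map s [0..<length w] then
              (if \<exists>q. cnt s La q (length w) < cnt s La 0 (length w) then 1 else 2) else 0)" for w
  show ?thesis
  proof (intro exI[of _ c] conjI ballI allI impI)
    fix w show "c w \<in> {0, 1, 2}" unfolding c_def by (rule if3)
  next
    fix V assume fV: "factorization V s"
    show "\<exists>i j. c (V i) \<noteq> c (V j)"
    proof (rule ccontr)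
      assume "\<not> ?thesis"
      then have const: "c (V i) = c (V 0)" for i by auto
      define n where "n i = length (V i)" for i
      define t where "t k = (\<Sum>i<k. n i)" for k
      have Vi: "V i = map s [t i..<t i + n i]" for i
        using blocks_of_fact(1)[OF fV, of i] unfolding t_def n_def by assumption
      have npos: "n i \<ge> 1" for i
        using blocks_of_fact(2)[OF fV, of i] by (simp add: n_def Suc_le_eq)
      have t0: "t 0 = 0" by (simp add: t_def)
      have V0: "V 0 = map s [0..<length (V 0)]" using Vi[of 0] unfolding t0 n_def add_0 by assumption
      have cval: "c (V i) = (if \<exists>q. cnt s La q (n i) < cnt s La 0 (n i) then 1 else 2)"
        if "V i = map s [0..<length (V i)]" for i
        unfolding c_def n_def by (rule if_P[OF that])
      have c0: "c (V 0) \<noteq> 0" using cval[OF V0] by simp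
      have pref: "V i = map s [0..<length (V i)]" for i
      proof (rule ccontr)
        assume "V i \<noteq> map s [0..<length (V i)]"
        then have "c (V i) = 0" unfolding c_def by (rule if_not_P)
        with const[of i] c0 show False by metis
      qed
      have pre: "s (t i + l) = s l" if "l < n i" for i l
      proof -
        have "V i = map s [0..<n i]" unfolding n_def by (rule pref)
        then have "map s [t i..<t i + n i] = map s [0..<n i]" using Vi[of i] by simp
        then have "map s [t i..<t i + n i] ! l = map s [0..<n i] ! l" by simp
        then show ?thesis using that by simp
      qed
      have bal: "\<And>p q L. cnt s x p L \<le> cnt s x q L + 1" for x using bal_cnt[OF bl] by blast
      have tdef: "\<And>k. t k = (\<Sum>i<k. n i)" by (simp add: t_def)
      show False
      proof (cases "c (V 0) = 1")
        case True
        have exlt: "\<exists>q. cnt s La q (n i) < cnt s La 0 (n i)" for i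
        proof -
          have "c (V i) = 1" using const[of i] True by (rule trans)
          then show ?thesis using cval[OF pref[of i]] if12 by metis
        qed
        have mx: "cnt s La q (n i) \<le> cnt s La 0 (n i)" for i q
        proof -
          obtain q0 where "cnt s La q0 (n i) < cnt s La 0 (n i)" using exlt[of i] by blast
          moreover have "cnt s La q (n i) \<le> cnt s La q0 (n i) + 1" using bal_cnt[OF bl] .
          ultimately show ?thesis by linarith
        qed
        show False using core[of s La, OF bal np npos tdef pre mx] by blast
      next
        case False
        then have nexlt: "\<not> (\<exists>q. cnt s La q (n i) < cnt s La 0 (n i))" for i
        proof -
          have "c (V i) \<noteq> 1" using const[of i] False by metis
          then show ?thesis using cval[OF pref[of i]] if12' by metis
        qed
        then have "cnt s Lb q (n i) \<le> cnt s Lb 0 (n i)" for i q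
        proof -
          have "cnt s La 0 (n i) \<le> cnt s La q (n i)" using nexlt[of i] by (simp add: not_less)
          then show ?thesis using cnt_ab[of s q "n i"] cnt_ab[of s 0 "n i"] by linarith
        qed
        then show False using core[of s Lb, OF bal np npos tdef pre] by blast
      qed
    qed
  qed
qed

end
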